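(* For $n\geq 5$, in the Waiter-Client game on $K_n$, Waiter can force Client to build a red Hamilton path within $n-1$ rounds such that one of its endpoints is incident with at most two blue edges.
   Context: Waiter-Client game on $K_n$: in each round Waiter offers two free edges of $K_n$, Client colors one of them red and the other becomes blue. *)

theory Defs
  imports Main
begin

definition Kn_edges :: "nat \<Rightarrow> nat set set" where
  "Kn_edges n = {e. \<exists>u v. u < n \<and> v < n \<and> u \<noteq> v \<and> e = {u, v}}"

definition ham_path_in :: "nat \<Rightarrow> nat set set \<Rightarrow> nat list \<Rightarrow> bool" where
  "ham_path_in n R vs \<longleftrightarrow> distinct vs \<and> set vs = {..<n} \<and>
     (\<forall>i. Suc i < length vs \<longrightarrow> {vs ! i, vs ! Suc i} \<in> R)"

definition deg_in :: "nat set set \<Rightarrow> nat \<Rightarrow> nat" where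
  "deg_in B v = card {e \<in> B. v \<in> e}"

definition goal :: "nat \<Rightarrow> nat set set \<Rightarrow> nat set set \<Rightarrow> bool" where
  "goal n R B \<longleftrightarrow> (\<exists>vs. ham_path_in n R vs \<and>
      (deg_in B (hd vs) \<le> 2 \<or> deg_in B (last vs) \<le> 2))"

text \<open>In each round Waiter offers two distinct free edges; Client colours one red, the other blue.\<close>
fun waiter_wins :: "nat \<Rightarrow> nat \<Rightarrow> nat set set \<Rightarrow> nat set set \<Rightarrow> bool" where
  "waiter_wins n 0 R B = goal n R B"
| "waiter_wins n (Suc k) R B = (goal n R B \<or>
     (\<exists>e1 e2. e1 \<in> Kn_edges n \<and> e2 \<in> Kn_edges n \<and> e1 \<noteq> e2 \<and>
        e1 \<notin> R \<union> B \<and> e2 \<notin> R \<union> B \<and>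
        waiter_wins n k (insert e1 R) (insert e2 B) \<and>
        waiter_wins n k (insert e2 R) (insert e1 B)))"

end

theory Submission
  imports Defs
begin

definition inv :: "nat \<Rightarrow> nat list \<Rightarrow> nat set set \<Rightarrow> nat set set \<Rightarrow> bool" where
  "inv n vs R B \<longleftrightarrow> distinct vs \<and> 2 \<le> length vs \<and> set vs \<subseteq> {..<n} \<and>
     (\<forall>i. Suc i < length vs \<longrightarrow> {vs ! i, vs ! Suc i} \<in> R) \<and>
     (\<forall>e\<in>R. e \<subseteq> set vs) \<and>
     (\<forall>e\<in>B. e \<subseteq> set vs \<or> (\<exists>v\<in>e. v \<in> set vs \<and> v \<noteq> hd vs \<and> v \<noteq> last vs)) \<and>
     (\<forall>y. y \<notin> set vs \<longrightarrow> deg_in B y \<le> 1) \<and> finite B"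

lemma deg_insert_le: "finite B \<Longrightarrow> deg_in (insert f B) y \<le> Suc (deg_in B y)"
proof -
  assume "finite B"
  have "{e \<in> insert f B. y \<in> e} \<subseteq> insert f {e \<in> B. y \<in> e}" by auto
  moreover have "finite (insert f {e \<in> B. y \<in> e})" using \<open>finite B\<close> by auto
  ultimately have "card {e \<in> insert f B. y \<in> e} \<le> card (insert f {e \<in> B. y \<in> e})"
    by (rule card_mono[rotated])
  also have "\<dots> \<le> Suc (card {e \<in> B. y \<in> e})" by (simp add: card_insert_le_m1)
  finally show ?thesis unfolding deg_in_def .
qed

lemma deg_insert_notin: "y \<notin> f \<Longrightarrow> deg_in (insert f B) y = deg_in B y"
  unfolding deg_in_def by (metis (no_types, lifting) Collect_cong insert_iff)

lemma hd_last_ne: "distinct vs \<Longrightarrow> 2 \<le> length vs \<Longrightarrow> hd vs \<noteq> last vs"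
  by (cases vs) (auto simp: last_in_set)

lemma invD:
  assumes "inv n vs R B"
  shows "distinct vs" "2 \<le> length vs" "set vs \<subseteq> {..<n}"
    "\<And>i. Suc i < length vs \<Longrightarrow> {vs ! i, vs ! Suc i} \<in> R"
    "\<And>e. e \<in> R \<Longrightarrow> e \<subseteq> set vs"
    "\<And>e. e \<in> B \<Longrightarrow> e \<subseteq> set vs \<or> (\<exists>v\<in>e. v \<in> set vs \<and> v \<noteq> hd vs \<and> v \<noteq> last vs)"
    "\<And>y. y \<notin> set vs \<Longrightarrow> deg_in B y \<le> 1" "finite B"
  using assms unfolding inv_def by simp_all

lemma inv_ne: "inv n vs R B \<Longrightarrow> vs \<noteq> []"
  using invD(2)[of n vs R B] by auto

lemma offer_ok:
  assumes "inv n vs R B" "x < n" "x \<notin> set vs"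
  shows "{hd vs, x} \<in> Kn_edges n" "{last vs, x} \<in> Kn_edges n" "{hd vs, x} \<noteq> {last vs, x}"
    "{hd vs, x} \<notin> R \<union> B" "{last vs, x} \<notin> R \<union> B"
proof -
  have ne: "vs \<noteq> []" using inv_ne[OF assms(1)] .
  have hv: "hd vs \<in> set vs" "last vs \<in> set vs" using ne by auto
  have hl: "hd vs \<noteq> last vs" using hd_last_ne invD(1,2)[OF assms(1)] by blast
  note sub = invD(3)[OF assms(1)] and Rs = invD(5)[OF assms(1)] and Bs = invD(6)[OF assms(1)]
  have lt: "hd vs < n" "last vs < n" using hv sub by auto
  have xh: "hd vs \<noteq> x" "last vs \<noteq> x" using hv assms(3) by auto
  show "{hd vs, x} \<in> Kn_edges n" unfolding Kn_edges_def
    using lt(1) assms(2) xh(1) by (intro CollectI exI[of _ "hd vs"] exI[of _ x]) simp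
  show "{last vs, x} \<in> Kn_edges n" unfolding Kn_edges_def
    using lt(2) assms(2) xh(2) by (intro CollectI exI[of _ "last vs"] exI[of _ x]) simp
  show "{hd vs, x} \<noteq> {last vs, x}" using hl xh by (auto simp: doubleton_eq_iff)
  have nR: "e \<notin> R" if "x \<in> e" for e using Rs that assms(3) by auto
  have nB1: "{hd vs, x} \<notin> B"
  proof
    assume "{hd vs, x} \<in> B"
    then have "{hd vs, x} \<subseteq> set vs \<or> (\<exists>v\<in>{hd vs, x}. v \<in> set vs \<and> v \<noteq> hd vs \<and> v \<noteq> last vs)"
      by (rule Bs)
    then show False using assms(3) by auto
  qed
  have nB2: "{last vs, x} \<notin> B"
  proof
    assume "{last vs, x} \<in> B"
    then have "{last vs, x} \<subseteq> set vs \<or> (\<exists>v\<in>{last vs, x}. v \<in> set vs \<and> v \<noteq> hd vs \<and> v \<noteq> last vs)"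
      by (rule Bs)
    then show False using assms(3) by auto
  qed
  show "{hd vs, x} \<notin> R \<union> B" using nR nB1 by auto
  show "{last vs, x} \<notin> R \<union> B" using nR nB2 by auto
qed

lemma step_front:
  assumes "inv n vs R B" "x < n" "x \<notin> set vs"
  shows "inv n (x # vs) (insert {hd vs, x} R) (insert {last vs, x} B)"
proof -
  have ne: "vs \<noteq> []" using inv_ne[OF assms(1)] .
  have hv: "hd vs \<in> set vs" "last vs \<in> set vs" using ne by auto
  have path: "\<forall>i. Suc i < length (x # vs) \<longrightarrow> {(x # vs) ! i, (x # vs) ! Suc i} \<in> insert {hd vs, x} R"
  proof (intro allI impI)
    fix i assume i: "Suc i < length (x # vs)"
    show "{(x # vs) ! i, (x # vs) ! Suc i} \<in> insert {hd vs, x} R"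
    proof (cases i)
      case 0 then show ?thesis using ne by (simp add: hd_conv_nth insert_commute)
    next
      case (Suc j) then show ?thesis using i invD(4)[OF assms(1), of j] by simp
    qed
  qed
  show ?thesis unfolding inv_def
  proof (intro conjI)
    show "distinct (x # vs)" using invD(1)[OF assms(1)] assms(3) by simp
    show "2 \<le> length (x # vs)" using invD(2)[OF assms(1)] by simp
    show "set (x # vs) \<subseteq> {..<n}" using invD(3)[OF assms(1)] assms(2) by simp
    show "\<forall>e\<in>insert {hd vs, x} R. e \<subseteq> set (x # vs)" using invD(5)[OF assms(1)] hv by auto
    show "\<forall>e\<in>insert {last vs, x} B. e \<subseteq> set (x # vs) \<or>
      (\<exists>v\<in>e. v \<in> set (x # vs) \<and> v \<noteq> hd (x # vs) \<and> v \<noteq> last (x # vs))"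
    proof
      fix e assume "e \<in> insert {last vs, x} B"
      then consider "e = {last vs, x}" | "e \<in> B" by auto
      then show "e \<subseteq> set (x # vs) \<or>
        (\<exists>v\<in>e. v \<in> set (x # vs) \<and> v \<noteq> hd (x # vs) \<and> v \<noteq> last (x # vs))"
      proof cases
        case 1 then show ?thesis using hv by auto
      next
        case 2
        then have "e \<subseteq> set vs \<or> (\<exists>v\<in>e. v \<in> set vs \<and> v \<noteq> hd vs \<and> v \<noteq> last vs)"
          using invD(6)[OF assms(1)] by blast
        then show ?thesis using ne assms(3) by auto
      qed
    qed
    show "\<forall>y. y \<notin> set (x # vs) \<longrightarrow> deg_in (insert {last vs, x} B) y \<le> 1"
    proof (intro allI impI)
      fix y assume y: "y \<notin> set (x # vs)"
      then have "y \<notin> {last vs, x}" using hv by auto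
      then show "deg_in (insert {last vs, x} B) y \<le> 1"
        using deg_insert_notin invD(7)[OF assms(1), of y] y by simp
    qed
    show "finite (insert {last vs, x} B)" using invD(8)[OF assms(1)] by simp
  qed (rule path)
qed

lemma step_back:
  assumes "inv n vs R B" "x < n" "x \<notin> set vs"
  shows "inv n (vs @ [x]) (insert {last vs, x} R) (insert {hd vs, x} B)"
proof -
  have ne: "vs \<noteq> []" using inv_ne[OF assms(1)] .
  have hv: "hd vs \<in> set vs" "last vs \<in> set vs" using ne by auto
  have path: "\<forall>i. Suc i < length (vs @ [x]) \<longrightarrow> {(vs @ [x]) ! i, (vs @ [x]) ! Suc i} \<in> insert {last vs, x} R"
  proof (intro allI impI)
    fix i assume i: "Suc i < length (vs @ [x])"
    show "{(vs @ [x]) ! i, (vs @ [x]) ! Suc i} \<in> insert {last vs, x} R"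
    proof (cases "Suc i < length vs")
      case True then show ?thesis using invD(4)[OF assms(1), of i] by (simp add: nth_append)
    next
      case False
      then have "i = length vs - 1" using i by auto
      then show ?thesis using ne False by (auto simp: nth_append last_conv_nth)
    qed
  qed
  show ?thesis unfolding inv_def
  proof (intro conjI)
    show "distinct (vs @ [x])" using invD(1)[OF assms(1)] assms(3) by simp
    show "2 \<le> length (vs @ [x])" using invD(2)[OF assms(1)] by simp
    show "set (vs @ [x]) \<subseteq> {..<n}" using invD(3)[OF assms(1)] assms(2) by simp
    show "\<forall>e\<in>insert {last vs, x} R. e \<subseteq> set (vs @ [x])" using invD(5)[OF assms(1)] hv by auto
    show "\<forall>e\<in>insert {hd vs, x} B. e \<subseteq> set (vs @ [x]) \<or>
      (\<exists>v\<in>e. v \<in> set (vs @ [x]) \<and> v \<noteq> hd (vs @ [x]) \<and> v \<noteq> last (vs @ [x]))"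
    proof
      fix e assume "e \<in> insert {hd vs, x} B"
      then consider "e = {hd vs, x}" | "e \<in> B" by auto
      then show "e \<subseteq> set (vs @ [x]) \<or>
        (\<exists>v\<in>e. v \<in> set (vs @ [x]) \<and> v \<noteq> hd (vs @ [x]) \<and> v \<noteq> last (vs @ [x]))"
      proof cases
        case 1 then show ?thesis using hv by auto
      next
        case 2
        then have "e \<subseteq> set vs \<or> (\<exists>v\<in>e. v \<in> set vs \<and> v \<noteq> hd vs \<and> v \<noteq> last vs)"
          using invD(6)[OF assms(1)] by blast
        then show ?thesis using ne assms(3) by auto
      qed
    qed
    show "\<forall>y. y \<notin> set (vs @ [x]) \<longrightarrow> deg_in (insert {hd vs, x} B) y \<le> 1"
    proof (intro allI impI)
      fix y assume y: "y \<notin> set (vs @ [x])"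
      then have "y \<notin> {hd vs, x}" using hv by auto
      then show "deg_in (insert {hd vs, x} B) y \<le> 1"
        using deg_insert_notin invD(7)[OF assms(1), of y] y by simp
    qed
    show "finite (insert {hd vs, x} B)" using invD(8)[OF assms(1)] by simp
  qed (rule path)
qed

lemma inv_goal:
  assumes "inv n vs R B" "length vs = n" "deg_in B (hd vs) \<le> 2 \<or> deg_in B (last vs) \<le> 2"
  shows "goal n R B"
proof -
  have "card (set vs) = card {..<n}" using distinct_card[OF invD(1)[OF assms(1)]] assms(2) by simp
  then have "set vs = {..<n}" using card_subset_eq[OF _ invD(3)[OF assms(1)]] by simp
  then have "ham_path_in n R vs" unfolding ham_path_in_def using invD(1,4)[OF assms(1)] by blast
  then show ?thesis unfolding goal_def using assms(3) by blast
qed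

lemma exists_outside:
  assumes "inv n vs R B" "length vs < n"
  obtains x where "x < n" "x \<notin> set vs"
proof -
  have "card (set vs) < card {..<n}" using assms(2) distinct_card[OF invD(1)[OF assms(1)]] by simp
  then have "\<not> {..<n} \<subseteq> set vs" by (meson card_mono finite_set not_le)
  then show ?thesis using that by auto
qed

lemma main:
  "inv n vs R B \<Longrightarrow> n - length vs = Suc k \<Longrightarrow> waiter_wins n (Suc k) R B"
proof (induction k arbitrary: vs R B)
  case (0 vs R B)
  obtain x where x: "x < n" "x \<notin> set vs" using exists_outside 0 by (metis zero_less_Suc zero_less_diff)
  note ok = offer_ok[OF 0(1) x]
  have fB: "finite B" and dB: "deg_in B x \<le> 1" using invD(7,8)[OF 0(1)] x by auto
  have A: "waiter_wins n 0 (insert {hd vs, x} R) (insert {last vs, x} B)"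
    unfolding waiter_wins.simps(1)
  proof (rule inv_goal[OF step_front[OF 0(1) x]])
    show "length (x # vs) = n" using 0 by simp
    show "deg_in (insert {last vs, x} B) (hd (x # vs)) \<le> 2 \<or> deg_in (insert {last vs, x} B) (last (x # vs)) \<le> 2"
      using deg_insert_le[OF fB, of "{last vs, x}" x] dB by simp
  qed
  have C: "waiter_wins n 0 (insert {last vs, x} R) (insert {hd vs, x} B)"
    unfolding waiter_wins.simps(1)
  proof (rule inv_goal[OF step_back[OF 0(1) x]])
    show "length (vs @ [x]) = n" using 0 by simp
    show "deg_in (insert {hd vs, x} B) (hd (vs @ [x])) \<le> 2 \<or> deg_in (insert {hd vs, x} B) (last (vs @ [x])) \<le> 2"
      using deg_insert_le[OF fB, of "{hd vs, x}" x] dB by simp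
  qed
  show ?case
    apply (subst waiter_wins.simps(2))
    apply (rule disjI2, rule exI[of _ "{hd vs, x}"], rule exI[of _ "{last vs, x}"])
    apply (intro conjI)
    by (rule ok A C)+
next
  case (Suc k vs R B)
  obtain x where x: "x < n" "x \<notin> set vs" using exists_outside Suc by (metis zero_less_Suc zero_less_diff)
  note ok = offer_ok[OF Suc(2) x]
  have A: "waiter_wins n (Suc k) (insert {hd vs, x} R) (insert {last vs, x} B)"
    by (rule Suc.IH[OF step_front[OF Suc(2) x]]) (use Suc(3) in simp)
  have C: "waiter_wins n (Suc k) (insert {last vs, x} R) (insert {hd vs, x} B)"
    by (rule Suc.IH[OF step_back[OF Suc(2) x]]) (use Suc(3) in simp)
  show ?case
    apply (subst waiter_wins.simps(2))
    apply (rule disjI2, rule exI[of _ "{hd vs, x}"], rule exI[of _ "{last vs, x}"])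
    apply (intro conjI)
    by (rule ok A C)+
qed

lemma kn: "u < n \<Longrightarrow> v < n \<Longrightarrow> u \<noteq> v \<Longrightarrow> {u, v} \<in> Kn_edges n"
  unfolding Kn_edges_def by (intro CollectI exI[of _ u] exI[of _ v]) simp

lemma start:
  assumes "distinct [a, b, c, r, d]" "a < n" "b < n" "c < n"
  shows "inv n [a, b, c] {{b, c}, {b, a}} {{b, d}, {b, r}}"
  unfolding inv_def
proof (intro conjI allI impI)
  show "distinct [a, b, c]" using assms by simp
  show "2 \<le> length [a, b, c]" by simp
  show "set [a, b, c] \<subseteq> {..<n}" using assms by simp
  fix i assume "Suc i < length [a, b, c]"
  then have "i = 0 \<or> i = 1" by auto
  then show "{[a, b, c] ! i, [a, b, c] ! Suc i} \<in> {{b, c}, {b, a}}" by (auto simp: insert_commute)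
next
  show "\<forall>e\<in>{{b, c}, {b, a}}. e \<subseteq> set [a, b, c]" by auto
  show "\<forall>e\<in>{{b, d}, {b, r}}. e \<subseteq> set [a, b, c] \<or>
    (\<exists>v\<in>e. v \<in> set [a, b, c] \<and> v \<noteq> hd [a, b, c] \<and> v \<noteq> last [a, b, c])"
    using assms by auto
  show "finite {{b, d}, {b, r}}" by simp
  fix y assume y: "y \<notin> set [a, b, c]"
  have "{e \<in> {{b, d}, {b, r}}. y \<in> e} \<subseteq> {{b, y}}" using y by auto
  then have "card {e \<in> {{b, d}, {b, r}}. y \<in> e} \<le> card {{b, y}}" by (intro card_mono) auto
  then show "deg_in {{b, d}, {b, r}} y \<le> 1" unfolding deg_in_def by simp
qed

lemma round2:
  assumes n: "n \<ge> 5" and ar: "(a = 0 \<and> r = 2) \<or> (a = 2 \<and> r = (0::nat))"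
  shows "waiter_wins n (Suc (Suc (n - 4))) {{1, a}} {{1, r}}"
proof -
  have k: "n - length [a, 1, 3::nat] = Suc (n - 4)" using n by simp
  have I1: "inv n [a, 1, 3] {{1, 3}, {1, a}} {{1, 4}, {1, r}}"
    by (rule start) (use n ar in auto)
  have I2: "inv n [a, 1, 4] {{1, 4}, {1, a}} {{1, 3}, {1, r}}"
    by (rule start) (use n ar in auto)
  have W1: "waiter_wins n (Suc (n - 4)) {{1, 3}, {1, a}} {{1, 4}, {1, r}}"
    by (rule main[OF I1]) (use n in simp)
  have W2: "waiter_wins n (Suc (n - 4)) {{1, 4}, {1, a}} {{1, 3}, {1, r}}"
    by (rule main[OF I2]) (use n in simp)
  have e: "{1, 3} \<in> Kn_edges n" "{1, 4} \<in> Kn_edges n" using n by (auto intro!: kn)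
  have f: "{1::nat, 3} \<noteq> {1, 4}" "{1::nat, 3} \<notin> {{1, a}} \<union> {{1, r}}" "{1::nat, 4} \<notin> {{1, a}} \<union> {{1, r}}"
    using ar by (auto simp: doubleton_eq_iff)
  show ?thesis
    apply (subst waiter_wins.simps(2))
    apply (rule disjI2, rule exI[of _ "{1, 3}"], rule exI[of _ "{1, 4}"])
    apply (intro conjI)
    by (rule e f W1 W2)+
qed

theorem lemma3p1:
  fixes n :: nat
  assumes "n \<ge> 5"
  shows "waiter_wins n (n - 1) {} {}"
proof -
  have eq: "n - 1 = Suc (Suc (Suc (n - 4)))" using assms by simp
  have e: "{1, 0} \<in> Kn_edges n" "{1, 2} \<in> Kn_edges n" using assms by (auto intro!: kn)
  have f: "{1::nat, 0} \<noteq> {1, 2}" by (auto simp: doubleton_eq_iff)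
  have W1: "waiter_wins n (Suc (Suc (n - 4))) {{1, 0}} {{1, 2}}" by (rule round2) (use assms in auto)
  have W2: "waiter_wins n (Suc (Suc (n - 4))) {{1, 2}} {{1, 0}}" by (rule round2) (use assms in auto)
  have f2: "{1::nat, 0} \<notin> {} \<union> {}" "{1::nat, 2} \<notin> {} \<union> {}" by simp_all
  show ?thesis unfolding eq
    apply (subst waiter_wins.simps(2))
    apply (rule disjI2, rule exI[of _ "{1, 0}"], rule exI[of _ "{1, 2}"])
    apply (intro conjI)
    by (rule e f f2 W1 W2)+
qed

end
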